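(* Let $X$ be a first-countable well-filtered space such that $\min(K)$ is countable for every $K\in\mathsf{K}(X)$. Then the upper Vietoris topology and the Scott topology on $\mathsf{K}(X)$ coincide.
   Context: Spaces are $T_0$; specialization order $x\le y$ iff $x\in\overline{\{y\}}$; saturated = upper set. $\mathsf{K}(X)$ = nonempty compact saturated subsets ordered by reverse inclusion; $\min(K)$ is the set of minimal points of $K$ in the specialization order. Scott topology on a poset: upper sets $U$ such that every directed $D$ with existing supremum in $U$ meets $U$. Upper Vietoris topology on $\mathsf{K}(X)$: base $\Box U=\{K:K\subseteq U\}$, $U$ open. Well-filtered: for open $U$ and $\mathcal K\subseteq\mathsf{K}(X)$ filtered under inclusion, $\bigcap\mathcal K\subseteq U$ implies some $K\in\mathcal K$ lies in $U$. *)

theory Defs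
  imports "HOL-Analysis.Analysis"
begin

definition spec_le :: "'a topology \<Rightarrow> 'a \<Rightarrow> 'a \<Rightarrow> bool" where
  "spec_le X x y \<longleftrightarrow> x \<in> topspace X \<and> y \<in> topspace X \<and> x \<in> X closure_of {y}"

definition saturated :: "'a topology \<Rightarrow> 'a set \<Rightarrow> bool" where
  "saturated X A \<longleftrightarrow> A \<subseteq> topspace X \<and>
     (\<forall>x \<in> A. \<forall>y \<in> topspace X. spec_le X x y \<longrightarrow> y \<in> A)"

definition KX :: "'a topology \<Rightarrow> 'a set set" where
  "KX X = {K. K \<noteq> {} \<and> compactin X K \<and> saturated X K}"

definition min_pts :: "'a topology \<Rightarrow> 'a set \<Rightarrow> 'a set" where
  "min_pts X K = {x \<in> K. \<forall>y \<in> K. spec_le X y x \<longrightarrow> y = x}"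

definition well_filtered :: "'a topology \<Rightarrow> bool" where
  "well_filtered X \<longleftrightarrow>
     (\<forall>U \<KK>. openin X U \<and> \<KK> \<subseteq> KX X \<and> \<KK> \<noteq> {} \<and>
        (\<forall>K1 \<in> \<KK>. \<forall>K2 \<in> \<KK>. \<exists>K3 \<in> \<KK>. K3 \<subseteq> K1 \<and> K3 \<subseteq> K2) \<and>
        \<Inter>\<KK> \<subseteq> U \<longrightarrow> (\<exists>K \<in> \<KK>. K \<subseteq> U))"

definition directed_in :: "'b set \<Rightarrow> ('b \<Rightarrow> 'b \<Rightarrow> bool) \<Rightarrow> 'b set \<Rightarrow> bool" where
  "directed_in P le D \<longleftrightarrow> D \<subseteq> P \<and> D \<noteq> {} \<and>
     (\<forall>a \<in> D. \<forall>b \<in> D. \<exists>c \<in> D. le a c \<and> le b c)"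

definition is_sup_in :: "'b set \<Rightarrow> ('b \<Rightarrow> 'b \<Rightarrow> bool) \<Rightarrow> 'b set \<Rightarrow> 'b \<Rightarrow> bool" where
  "is_sup_in P le D s \<longleftrightarrow> s \<in> P \<and> (\<forall>d \<in> D. le d s) \<and>
     (\<forall>u \<in> P. (\<forall>d \<in> D. le d u) \<longrightarrow> le s u)"

definition scott_open :: "'b set \<Rightarrow> ('b \<Rightarrow> 'b \<Rightarrow> bool) \<Rightarrow> 'b set \<Rightarrow> bool" where
  "scott_open P le U \<longleftrightarrow> U \<subseteq> P \<and>
     (\<forall>x \<in> U. \<forall>y \<in> P. le x y \<longrightarrow> y \<in> U) \<and>
     (\<forall>D s. directed_in P le D \<and> is_sup_in P le D s \<and> s \<in> U \<longrightarrow> D \<inter> U \<noteq> {})"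

definition K_le :: "'a set \<Rightarrow> 'a set \<Rightarrow> bool" where
  "K_le K1 K2 \<longleftrightarrow> K2 \<subseteq> K1"

definition upper_vietoris :: "'a topology \<Rightarrow> 'a set topology" where
  "upper_vietoris X = topology_generated_by {{K \<in> KX X. K \<subseteq> U} | U. openin X U}"

end

theory Submission
  imports Defs
begin

lemma spec_le_refl: "x \<in> topspace X \<Longrightarrow> spec_le X x x"
  using closure_of_subset[of "{x}" X] by (auto simp: spec_le_def)

lemma spec_le_trans: "spec_le X x y \<Longrightarrow> spec_le X y z \<Longrightarrow> spec_le X x z"
  unfolding spec_le_def
  by (metis closure_of_closure_of closure_of_mono empty_subsetI insert_subset subsetD)

lemma spec_le_open: "openin X U \<Longrightarrow> x \<in> U \<Longrightarrow> spec_le X x y \<Longrightarrow> y \<in> U"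
  by (auto simp: spec_le_def in_closure_of)

lemma spec_le_antisym: "t0_space X \<Longrightarrow> spec_le X x y \<Longrightarrow> spec_le X y x \<Longrightarrow> x = y"
  unfolding t0_space_def by (metis spec_le_def spec_le_open)

lemma finite_chain_min:
  assumes "finite G" "G \<noteq> {}" "\<forall>a\<in>G. \<forall>b\<in>G. spec_le X a b \<or> spec_le X b a"
  shows "\<exists>g\<in>G. \<forall>h\<in>G. spec_le X g h"
  using assms
proof (induction G rule: finite_ne_induct)
  case (singleton x)
  then have "spec_le X x x" by blast
  then show ?case by blast
next
  case (insert x F)
  have pF: "\<forall>a\<in>F. \<forall>b\<in>F. spec_le X a b \<or> spec_le X b a" using insert.prems by blast
  obtain g where g: "g\<in>F" "\<forall>h\<in>F. spec_le X g h" using insert.IH[OF pF] by blast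
  from insert.prems g(1) have c: "spec_le X x g \<or> spec_le X g x" by blast
  have xx: "spec_le X x x" using insert.prems by blast
  show ?case
  proof (cases "spec_le X x g")
    case True
    have "\<forall>h\<in>insert x F. spec_le X x h"
    proof
      fix h assume "h \<in> insert x F"
      then show "spec_le X x h"
      proof
        assume "h = x" then show ?thesis using xx by simp
      next
        assume "h \<in> F" then show ?thesis using spec_le_trans[OF True] g(2) by blast
      qed
    qed
    then show ?thesis by blast
  next
    case False
    then have gx: "spec_le X g x" using c by blast
    have "\<forall>h\<in>insert x F. spec_le X g h" using gx g(2) by blast
    then show ?thesis using g(1) by blast
  qed
qed

lemma min_below:
  assumes t0: "t0_space X" and K: "compactin X K" and y: "y \<in> K"
  shows "\<exists>m\<in>min_pts X K. spec_le X m y"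
proof -
  define A where "A = {z\<in>K. spec_le X z y}"
  define Q where "Q = (\<lambda>a b. spec_le X b a)"
  have Ktop: "K \<subseteq> topspace X" using K compactin_subset_topspace by blast
  have yA: "y \<in> A" using y Ktop by (auto simp: A_def spec_le_refl)
  have reflA: "\<forall>x\<in>A. spec_le X x x" using Ktop by (auto simp: A_def intro!: spec_le_refl)
  have po: "partial_order_on A (relation_of Q A)"
    unfolding partial_order_on_def preorder_on_def refl_on_def trans_def antisym_def relation_of_def Q_def
    using reflA spec_le_trans spec_le_antisym[OF t0] by auto
  have ch: "\<exists>u \<in> A. \<forall>a \<in> C. Q a u" if C: "C \<in> Chains (relation_of Q A)" for C
  proof (cases "C = {}")
    case True then show ?thesis using yA by auto
  next
    case False
    have CA: "C \<subseteq> A" and comp: "\<forall>a\<in>C. \<forall>b\<in>C. spec_le X a b \<or> spec_le X b a"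
      using C unfolding Chains_def relation_of_def Q_def by auto
    let ?U = "(\<lambda>z. X closure_of {z}) ` C"
    have fip: "\<forall>\<U>. (\<forall>C\<in>\<U>. closedin X C) \<and> (\<forall>\<F>. finite \<F> \<and> \<F> \<subseteq> \<U> \<longrightarrow> K \<inter> \<Inter>\<F> \<noteq> {}) \<longrightarrow> K \<inter> \<Inter>\<U> \<noteq> {}"
      using K unfolding compactin_fip by (rule conjunct2)
    have "K \<inter> \<Inter>?U \<noteq> {}"
    proof (rule fip[rule_format], intro conjI)
      show "\<forall>Ca\<in>?U. closedin X Ca" by auto
      show "\<forall>\<F>. finite \<F> \<and> \<F> \<subseteq> ?U \<longrightarrow> K \<inter> \<Inter> \<F> \<noteq> {}"
      proof (intro allI impI)
        fix F assume F: "finite F \<and> F \<subseteq> ?U"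
        then obtain G where G: "G \<subseteq> C" "finite G" "F = (\<lambda>z. X closure_of {z}) ` G"
          by (meson finite_subset_image)
        show "K \<inter> \<Inter>F \<noteq> {}"
        proof (cases "G = {}")
          case True then show ?thesis using G y by auto
        next
          case False
          have compG: "\<forall>a\<in>G. \<forall>b\<in>G. spec_le X a b \<or> spec_le X b a" using comp G(1) by blast
          obtain g where g: "g \<in> G" "\<forall>h\<in>G. spec_le X g h"
            using finite_chain_min[OF G(2) False compG] by blast
          have "g \<in> K" using g G CA by (auto simp: A_def)
          moreover have "g \<in> \<Inter>F" using g G by (auto simp: spec_le_def)
          ultimately show ?thesis by blast
        qed
      qed
    qed
    then obtain w where w: "w \<in> K" "\<forall>z\<in>C. w \<in> X closure_of {z}" by auto
    obtain z0 where z0: "z0 \<in> C" using False by auto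
    have wz: "\<forall>z\<in>C. spec_le X w z"
      using w CA Ktop by (auto simp: spec_le_def A_def)
    have "spec_le X z0 y" using z0 CA by (auto simp: A_def)
    then have "spec_le X w y" using spec_le_trans[of X w z0 y] wz z0 by blast
    then have "w \<in> A" using w by (auto simp: A_def)
    then show ?thesis using wz by (auto simp: Q_def)
  qed
  obtain m where m: "m \<in> A" "\<forall>a\<in>A. Q m a \<longrightarrow> a = m"
    using predicate_Zorn[OF po ch] by blast
  have "m \<in> min_pts X K"
    unfolding min_pts_def
  proof (intro CollectI conjI ballI impI)
    show "m \<in> K" using m by (auto simp: A_def)
    fix z assume "z \<in> K" "spec_le X z m"
    then have "z \<in> A" using m spec_le_trans[of X z m y] by (auto simp: A_def)
    then show "z = m" using m \<open>spec_le X z m\<close> by (auto simp: Q_def)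
  qed
  moreover have "spec_le X m y" using m(1) unfolding A_def by blast
  ultimately show ?thesis by blast
qed


lemma KX_sub: "A \<in> KX X \<Longrightarrow> A \<subseteq> topspace X"
  unfolding KX_def using compactin_subset_topspace by blast

lemma inter_filtered_KX:
  assumes wf: "well_filtered X" and D: "directed_in (KX X) K_le D"
  shows "\<Inter>D \<in> KX X"
proof -
  have DK: "D \<subseteq> KX X" "D \<noteq> {}" and filt: "\<forall>a\<in>D. \<forall>b\<in>D. \<exists>c\<in>D. c \<subseteq> a \<and> c \<subseteq> b"
    using D unfolding directed_in_def K_le_def by auto
  have wf': "\<exists>K\<in>D. K \<subseteq> U" if "openin X U" "\<Inter>D \<subseteq> U" for U
    using wf[unfolded well_filtered_def, rule_format, of U D] DK filt that by blast
  obtain d where d: "d \<in> D" using DK by auto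
  have dK: "d \<in> KX X" using d DK by auto
  have top: "\<Inter>D \<subseteq> topspace X" using d KX_sub[OF dK] by auto
  have ne: "\<Inter>D \<noteq> {}"
  proof
    assume "\<Inter>D = {}"
    then obtain K where "K \<in> D" "K \<subseteq> {}" using wf'[of "{}"] by auto
    then show False using DK by (auto simp: KX_def)
  qed
  have comp: "compactin X (\<Inter>D)"
    unfolding compactin_def
  proof (intro conjI allI impI)
    show "\<Inter>D \<subseteq> topspace X" by (rule top)
    fix \<U> assume H: "(\<forall>U\<in>\<U>. openin X U) \<and> \<Inter>D \<subseteq> \<Union>\<U>"
    then have "openin X (\<Union>\<U>)" by auto
    then obtain K where K: "K \<in> D" "K \<subseteq> \<Union>\<U>" using wf' H by blast
    then have "compactin X K" using DK by (auto simp: KX_def)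
    then obtain F where "finite F" "F \<subseteq> \<U>" "K \<subseteq> \<Union>F" using H K unfolding compactin_def by meson
    then show "\<exists>F. finite F \<and> F \<subseteq> \<U> \<and> \<Inter>D \<subseteq> \<Union>F" using K by blast
  qed
  have sat: "saturated X (\<Inter>D)"
    unfolding saturated_def
  proof (intro conjI ballI impI)
    show "\<Inter>D \<subseteq> topspace X" by (rule top)
    fix x y assume xy: "x \<in> \<Inter>D" "y \<in> topspace X" "spec_le X x y"
    show "y \<in> \<Inter>D"
    proof
      fix K assume "K \<in> D"
      then have "saturated X K" "x \<in> K" using DK xy by (auto simp: KX_def)
      then show "y \<in> K" using xy unfolding saturated_def by blast
    qed
  qed
  show ?thesis using ne comp sat by (simp add: KX_def)
qed

lemma box_scott:
  assumes wf: "well_filtered X" and U: "openin X U"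
  shows "scott_open (KX X) K_le {K \<in> KX X. K \<subseteq> U}"
  unfolding scott_open_def
proof (intro conjI allI impI)
  show "{K \<in> KX X. K \<subseteq> U} \<subseteq> KX X" by auto
  show "\<forall>x\<in>{K \<in> KX X. K \<subseteq> U}. \<forall>y\<in>KX X. K_le x y \<longrightarrow> y \<in> {K \<in> KX X. K \<subseteq> U}"
    by (auto simp: K_le_def)
next
  fix D s assume H: "directed_in (KX X) K_le D \<and> is_sup_in (KX X) K_le D s \<and> s \<in> {K \<in> KX X. K \<subseteq> U}"
  have I: "\<Inter>D \<in> KX X" using inter_filtered_KX[OF wf] H by blast
  have "\<Inter>D \<subseteq> s" using H I unfolding is_sup_in_def K_le_def by blast
  then have sub: "\<Inter>D \<subseteq> U" using H by auto
  have DK: "D \<subseteq> KX X" "D \<noteq> {}" and filt: "\<forall>a\<in>D. \<forall>b\<in>D. \<exists>c\<in>D. c \<subseteq> a \<and> c \<subseteq> b"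
    using H unfolding directed_in_def K_le_def by auto
  have wf2: "\<exists>K\<in>D. K \<subseteq> U"
    using wf[unfolded well_filtered_def, rule_format, of U D] DK filt sub U by blast
  then show "D \<inter> {K \<in> KX X. K \<subseteq> U} \<noteq> {}" using DK by auto
qed


lemma scott_open_empty: "scott_open P le {}"
  unfolding scott_open_def by auto

lemma scott_open_Int:
  assumes a: "scott_open P le A" and b: "scott_open P le B"
  shows "scott_open P le (A \<inter> B)"
  unfolding scott_open_def
proof (intro conjI allI impI)
  show "A \<inter> B \<subseteq> P" using a unfolding scott_open_def by auto
  show "\<forall>x\<in>A \<inter> B. \<forall>y\<in>P. le x y \<longrightarrow> y \<in> A \<inter> B"
    using a b unfolding scott_open_def by blast
next
  fix D s assume H: "directed_in P le D \<and> is_sup_in P le D s \<and> s \<in> A \<inter> B"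
  obtain d1 where d1: "d1 \<in> D" "d1 \<in> A" using a H unfolding scott_open_def by blast
  obtain d2 where d2: "d2 \<in> D" "d2 \<in> B" using b H unfolding scott_open_def by blast
  obtain c where c: "c \<in> D" "le d1 c" "le d2 c" using H d1 d2 unfolding directed_in_def by blast
  have cP: "c \<in> P" using H c unfolding directed_in_def by blast
  have "c \<in> A" using a d1 c cP unfolding scott_open_def by blast
  moreover have "c \<in> B" using b d2 c cP unfolding scott_open_def by blast
  ultimately show "D \<inter> (A \<inter> B) \<noteq> {}" using c by blast
qed

lemma scott_open_Union:
  assumes "\<And>A. A \<in> \<A> \<Longrightarrow> scott_open P le A"
  shows "scott_open P le (\<Union>\<A>)"
  using assms unfolding scott_open_def by blast

lemma uv_imp_scott:
  assumes wf: "well_filtered X" and o: "openin (upper_vietoris X) \<U>"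
  shows "scott_open (KX X) K_le \<U>"
proof -
  have "generate_topology_on {{K \<in> KX X. K \<subseteq> U} | U. openin X U} \<U>"
    using o unfolding upper_vietoris_def by (simp add: openin_topology_generated_by_iff)
  then show ?thesis
  proof (induction rule: generate_topology_on.induct)
    case Empty then show ?case by (rule scott_open_empty)
  next
    case (Int a b) then show ?case using scott_open_Int by blast
  next
    case (UN K) then show ?case using scott_open_Union[of K] by blast
  next
    case (Basis s) then show ?case using box_scott[OF wf] by blast
  qed
qed


lemma enum_base:
  assumes Vc: "countable VV" and Vne: "VV \<noteq> {}" and Vprop: "\<forall>V\<in>VV. openin X V \<and> K \<subseteq> V"
  shows "\<exists>D::nat \<Rightarrow> 'a set. (\<forall>j. openin X (D j) \<and> K \<subseteq> D j) \<and> (\<forall>i j. i \<le> j \<longrightarrow> D j \<subseteq> D i)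
          \<and> (\<forall>V\<in>VV. \<exists>j. D j \<subseteq> V)"
proof -
  define v where "v = from_nat_into VV"
  have vr: "range v = VV" using Vc Vne unfolding v_def by simp
  have vp: "openin X (v i) \<and> K \<subseteq> v i" for i using vr Vprop by blast
  define D where "D j = \<Inter>(v ` {..j})" for j
  have "openin X (D j)" for j unfolding D_def
    by (rule openin_Inter) (use vp in auto)
  moreover have "K \<subseteq> D j" for j unfolding D_def using vp by blast
  moreover have "D j \<subseteq> D i" if "i \<le> j" for i j unfolding D_def using that by auto
  moreover have "\<exists>j. D j \<subseteq> V" if V: "V \<in> VV" for V
  proof -
    have "V \<in> range v" using V vr by simp
    then obtain j where "v j = V" by blast
    then have "D j \<subseteq> V" unfolding D_def by auto
    then show ?thesis by blast
  qed
  ultimately show ?thesis by (intro exI[of _ D]) blast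
qed

lemma countable_nbhd_base:
  assumes t0: "t0_space X" and fc: "first_countable X" and KK: "K \<in> KX X"
    and cm: "countable (min_pts X K)"
  shows "\<exists>D::nat \<Rightarrow> 'a set. (\<forall>j. openin X (D j) \<and> K \<subseteq> D j) \<and> (\<forall>i j. i \<le> j \<longrightarrow> D j \<subseteq> D i)
          \<and> (\<forall>W. openin X W \<and> K \<subseteq> W \<longrightarrow> (\<exists>j. D j \<subseteq> W))"
proof -
  have Kc: "compactin X K" and Ksat: "saturated X K" and Kne: "K \<noteq> {}" using KK by (auto simp: KX_def)
  have Ktop: "K \<subseteq> topspace X" using Kc compactin_subset_topspace by blast
  define M where "M = min_pts X K"
  have Mtop: "M \<subseteq> topspace X" using Ktop by (auto simp: min_pts_def M_def)
  have "\<forall>x\<in>M. \<exists>B. countable B \<and> (\<forall>V\<in>B. openin X V) \<and> (\<forall>U. openin X U \<and> x \<in> U \<longrightarrow> (\<exists>V\<in>B. x \<in> V \<and> V \<subseteq> U))"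
    using fc Mtop unfolding first_countable_def by blast
  then obtain B where B: "\<And>x. x \<in> M \<Longrightarrow> countable (B x) \<and> (\<forall>V\<in>B x. openin X V) \<and> (\<forall>U. openin X U \<and> x \<in> U \<longrightarrow> (\<exists>V\<in>B x. x \<in> V \<and> V \<subseteq> U))"
    by metis
  define BB where "BB = (\<Union>x\<in>M. B x)"
  have BBc: "countable BB" unfolding BB_def using cm B unfolding M_def by (auto intro: countable_UN)
  have BBo: "\<forall>V\<in>BB. openin X V" unfolding BB_def using B by blast
  have nb: "\<exists>F. finite F \<and> F \<subseteq> BB \<and> K \<subseteq> \<Union>F \<and> \<Union>F \<subseteq> W" if W: "openin X W" "K \<subseteq> W" for W
  proof -
    let ?G = "{b\<in>BB. b \<subseteq> W}"
    have "K \<subseteq> \<Union>?G"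
    proof
      fix y assume y: "y \<in> K"
      obtain m where m: "m \<in> M" "spec_le X m y" using min_below[OF t0 Kc y] unfolding M_def by blast
      have "m \<in> W" using m W by (auto simp: min_pts_def M_def)
      then obtain V where V: "V \<in> B m" "m \<in> V" "V \<subseteq> W" using B[OF m(1)] W by blast
      have "openin X V" using V B[OF m(1)] by blast
      then have "y \<in> V" using spec_le_open[of X V m y] V m by blast
      moreover have "V \<in> ?G" using V m(1) unfolding BB_def by blast
      ultimately show "y \<in> \<Union>?G" by blast
    qed
    moreover have "\<forall>b\<in>?G. openin X b" using BBo by blast
    ultimately obtain F where "finite F" "F \<subseteq> ?G" "K \<subseteq> \<Union>F"
      using Kc unfolding compactin_def by meson
    then show ?thesis by blast
  qed
  define VV where "VV = Union ` {F. finite F \<and> F \<subseteq> BB \<and> K \<subseteq> \<Union>F}"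
  have Vc: "countable VV" unfolding VV_def
    by (intro countable_image, rule countable_subset[OF _ countable_Collect_finite_subset[OF BBc]]) auto
  have Vne: "VV \<noteq> {}" using nb[of "topspace X"] Ktop unfolding VV_def by auto
  have Vprop: "\<forall>V\<in>VV. openin X V \<and> K \<subseteq> V" unfolding VV_def using BBo by auto
  obtain D :: "nat \<Rightarrow> 'a set" where D: "\<forall>j. openin X (D j) \<and> K \<subseteq> D j" "\<forall>i j. i \<le> j \<longrightarrow> D j \<subseteq> D i"
    "\<forall>V\<in>VV. \<exists>j. D j \<subseteq> V"
    using enum_base[OF Vc Vne Vprop] by blast
  have "\<exists>j. D j \<subseteq> W" if W: "openin X W" "K \<subseteq> W" for W
  proof -
    from nb[OF W] obtain F where F0: "finite F \<and> F \<subseteq> BB \<and> K \<subseteq> \<Union>F \<and> \<Union>F \<subseteq> W" by (rule exE)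
    then have F: "finite F" "F \<subseteq> BB" "K \<subseteq> \<Union>F" "\<Union>F \<subseteq> W" by simp_all
    then have "\<Union>F \<in> VV" unfolding VV_def by (intro imageI) simp
    then obtain j where "D j \<subseteq> \<Union>F" using D(3) by blast
    then show ?thesis using F(4) by blast
  qed
  then show ?thesis using D(1,2) by (intro exI[of _ D]) blast
qed


lemma scott_imp_uv_nbhd:
  assumes t0: "t0_space X" and fc: "first_countable X" and cmin: "\<forall>K \<in> KX X. countable (min_pts X K)"
    and S: "scott_open (KX X) K_le \<U>" and K: "K \<in> \<U>"
  shows "\<exists>V. openin X V \<and> K \<subseteq> V \<and> {A \<in> KX X. A \<subseteq> V} \<subseteq> \<U>"
proof -
  have UK: "\<U> \<subseteq> KX X" and up: "\<forall>x\<in>\<U>. \<forall>y\<in>KX X. K_le x y \<longrightarrow> y \<in> \<U>"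
    and sc: "\<forall>D s. directed_in (KX X) K_le D \<and> is_sup_in (KX X) K_le D s \<and> s \<in> \<U> \<longrightarrow> D \<inter> \<U> \<noteq> {}"
    using S unfolding scott_open_def by blast+
  have KK: "K \<in> KX X" using UK K by blast
  have Kc: "compactin X K" and Ksat: "saturated X K" and Kne: "K \<noteq> {}" using KK by (auto simp: KX_def)
  have Ktop: "K \<subseteq> topspace X" using Kc compactin_subset_topspace by blast
  have cK: "countable (min_pts X K)" using cmin KK by blast
  from countable_nbhd_base[OF t0 fc KK cK] obtain D :: "nat \<Rightarrow> 'a set" where
    D0: "(\<forall>j. openin X (D j) \<and> K \<subseteq> D j) \<and> (\<forall>i j. i \<le> j \<longrightarrow> D j \<subseteq> D i)
          \<and> (\<forall>W. openin X W \<and> K \<subseteq> W \<longrightarrow> (\<exists>j. D j \<subseteq> W))" by (rule exE)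
  have Do: "\<And>j. openin X (D j)" and DK: "\<And>j. K \<subseteq> D j" and Dm: "\<And>i j. i \<le> j \<Longrightarrow> D j \<subseteq> D i"
    and Db: "\<And>W. openin X W \<Longrightarrow> K \<subseteq> W \<Longrightarrow> \<exists>j. D j \<subseteq> W"
    using D0 by auto
  show ?thesis
  proof (rule ccontr)
    assume N: "\<not> ?thesis"
    have "\<forall>j. \<exists>A. A \<in> KX X \<and> A \<subseteq> D j \<and> A \<notin> \<U>"
    proof
      fix j
      show "\<exists>A. A \<in> KX X \<and> A \<subseteq> D j \<and> A \<notin> \<U>"
      proof (rule ccontr)
        assume "\<not> (\<exists>A. A \<in> KX X \<and> A \<subseteq> D j \<and> A \<notin> \<U>)"
        then have "{A \<in> KX X. A \<subseteq> D j} \<subseteq> \<U>" by blast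
        then show False using N Do[of j] DK[of j] by blast
      qed
    qed
    then obtain A where A0: "\<forall>j. A j \<in> KX X \<and> A j \<subseteq> D j \<and> A j \<notin> \<U>" by (rule choice[THEN exE])
    have AK: "\<And>j. A j \<in> KX X" and AD: "\<And>j. A j \<subseteq> D j" and AU: "\<And>j. A j \<notin> \<U>"
      using A0 by auto
    define L where "L k = K \<union> \<Union>(A ` {k..})" for k
    have Ltop: "L k \<subseteq> topspace X" for k using Ktop KX_sub[OF AK] by (auto simp: L_def)
    have LK: "L k \<in> KX X" for k
    proof -
      have ne: "L k \<noteq> {}" using Kne by (auto simp: L_def)
      have sat: "saturated X (L k)"
        unfolding saturated_def
      proof (intro conjI ballI impI)
        show "L k \<subseteq> topspace X" by (rule Ltop)
        fix x y assume xy: "x \<in> L k" "y \<in> topspace X" "spec_le X x y"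
        show "y \<in> L k"
        proof (cases "x \<in> K")
          case True then have "y \<in> K" using Ksat xy unfolding saturated_def by blast
          then show ?thesis by (simp add: L_def)
        next
          case False
          then obtain j where j: "j \<ge> k" "x \<in> A j" using xy(1) by (auto simp: L_def)
          have "saturated X (A j)" using AK[of j] by (simp add: KX_def)
          then have "y \<in> A j" using xy j unfolding saturated_def by blast
          then show ?thesis using j by (auto simp: L_def)
        qed
      qed
      have comp: "compactin X (L k)"
        unfolding compactin_def
      proof (intro conjI allI impI)
        show "L k \<subseteq> topspace X" by (rule Ltop)
        fix \<O> assume H: "(\<forall>U\<in>\<O>. openin X U) \<and> L k \<subseteq> \<Union>\<O>"
        have "K \<subseteq> \<Union>\<O>" using H by (auto simp: L_def)
        then have "\<exists>F. finite F \<and> F \<subseteq> \<O> \<and> K \<subseteq> \<Union>F" using H Kc unfolding compactin_def by meson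
        then obtain F0 where F00: "finite F0 \<and> F0 \<subseteq> \<O> \<and> K \<subseteq> \<Union>F0" by (rule exE)
        then have F0: "finite F0" "F0 \<subseteq> \<O>" "K \<subseteq> \<Union>F0" by simp_all
        have "openin X (\<Union>F0)" using F0 H by auto
        then obtain j0 where j0: "D j0 \<subseteq> \<Union>F0" using Db F0(3) by blast
        define C where "C = K \<union> \<Union>(A ` {k..<j0})"
        have Cc: "compactin X C" unfolding C_def
          apply (rule compactin_Un[OF Kc])
          apply (rule compactin_Union) using AK by (auto simp: KX_def)
        have "C \<subseteq> L k" by (auto simp: C_def L_def)
        then have "C \<subseteq> \<Union>\<O>" using H by blast
        then have "\<exists>F. finite F \<and> F \<subseteq> \<O> \<and> C \<subseteq> \<Union>F" using H Cc unfolding compactin_def by meson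
        then obtain F1 where F11: "finite F1 \<and> F1 \<subseteq> \<O> \<and> C \<subseteq> \<Union>F1" by (rule exE)
        then have F1: "finite F1" "F1 \<subseteq> \<O>" "C \<subseteq> \<Union>F1" by simp_all
        have "L k \<subseteq> \<Union>(F0 \<union> F1)"
        proof
          fix z assume z: "z \<in> L k"
          show "z \<in> \<Union>(F0 \<union> F1)"
          proof (cases "z \<in> C")
            case True then show ?thesis using F1 by blast
          next
            case False
            then obtain j where j: "j \<ge> k" "z \<in> A j" "\<not> j < j0" using z by (auto simp: L_def C_def)
            then have "z \<in> D j0" using AD[of j] Dm[of j0 j] by auto
            then show ?thesis using j0 by blast
          qed
        qed
        moreover have "finite (F0 \<union> F1)" "F0 \<union> F1 \<subseteq> \<O>" using F0 F1 by auto
        ultimately show "\<exists>F. finite F \<and> F \<subseteq> \<O> \<and> L k \<subseteq> \<Union>F" by (intro exI[of _ "F0 \<union> F1"]) simp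
      qed
      show ?thesis using ne sat comp by (simp add: KX_def)
    qed
    have Lm: "L j \<subseteq> L i" if "i \<le> j" for i j using that by (auto simp: L_def)
    have KL: "K \<subseteq> L k" for k by (auto simp: L_def)
    have LI: "\<Inter>(range L) \<subseteq> K"
    proof
      fix y assume y: "y \<in> \<Inter>(range L)"
      show "y \<in> K"
      proof (rule ccontr)
        assume yK: "y \<notin> K"
        have "y \<in> L 0" using y by blast
        then have ytop: "y \<in> topspace X" using Ltop by blast
        define W where "W = topspace X - X closure_of {y}"
        have Wo: "openin X W" unfolding W_def by (simp add: openin_diff closedin_closure_of)
        have KW: "K \<subseteq> W"
        proof
          fix x assume x: "x \<in> K"
          have "x \<notin> X closure_of {y}"
          proof
            assume "x \<in> X closure_of {y}"
            then have "spec_le X x y" using x Ktop ytop by (auto simp: spec_le_def)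
            then show False using Ksat x ytop yK unfolding saturated_def by blast
          qed
          then show "x \<in> W" using x Ktop by (auto simp: W_def)
        qed
        obtain j0 where j0: "D j0 \<subseteq> W" using Db[OF Wo KW] by blast
        have "y \<in> L j0" using y by blast
        then obtain j where j: "j \<ge> j0" "y \<in> A j" using yK by (auto simp: L_def)
        then have "y \<in> W" using AD[of j] Dm[of j0 j] j0 by auto
        moreover have "y \<in> X closure_of {y}" using ytop closure_of_subset[of "{y}" X] by auto
        ultimately show False by (auto simp: W_def)
      qed
    qed
    have filt: "\<forall>a\<in>range L. \<forall>b\<in>range L. \<exists>c\<in>range L. K_le a c \<and> K_le b c"
    proof (intro ballI)
      fix a b assume "a \<in> range L" "b \<in> range L"
      then obtain i j where ij: "a = L i" "b = L j" by blast
      have "L (max i j) \<subseteq> L i" "L (max i j) \<subseteq> L j" using Lm by auto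
      then show "\<exists>c\<in>range L. K_le a c \<and> K_le b c" using ij unfolding K_le_def
        by (intro bexI[of _ "L (max i j)"]) auto
    qed
    have dir: "directed_in (KX X) K_le (range L)"
      unfolding directed_in_def using LK filt by auto
    have sup: "is_sup_in (KX X) K_le (range L) K"
      unfolding is_sup_in_def K_le_def
    proof (intro conjI ballI impI)
      show "K \<in> KX X" by (rule KK)
      fix d assume "d \<in> range L" then show "K \<subseteq> d" using KL by auto
    next
      fix u assume "u \<in> KX X" "\<forall>d\<in>range L. u \<subseteq> d"
      then have "u \<subseteq> \<Inter>(range L)" by auto
      then show "u \<subseteq> K" using LI by auto
    qed
    have "range L \<inter> \<U> \<noteq> {}" using sc dir sup K by blast
    then obtain k where k: "L k \<in> \<U>" by auto
    have "A k \<subseteq> L k" by (auto simp: L_def)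
    then have "A k \<in> \<U>" using up k AK[of k] unfolding K_le_def by blast
    then show False using AU by blast
  qed
qed

theorem mainTheorem11:
  fixes X :: "'a topology"
  assumes "t0_space X"
    and "first_countable X"
    and "well_filtered X"
    and "\<forall>K \<in> KX X. countable (min_pts X K)"
  shows "\<forall>\<U>. openin (upper_vietoris X) \<U> \<longleftrightarrow> scott_open (KX X) K_le \<U>"
proof (intro allI iffI)
  fix \<U>
  assume "openin (upper_vietoris X) \<U>"
  then show "scott_open (KX X) K_le \<U>" using uv_imp_scott[OF assms(3)] by blast
next
  fix \<U> assume S: "scott_open (KX X) K_le \<U>"
  show "openin (upper_vietoris X) \<U>"
  proof (subst openin_subopen, intro ballI)
    fix K assume K: "K \<in> \<U>"
    from scott_imp_uv_nbhd[OF assms(1,2,4) S K] obtain V where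
      V0: "openin X V \<and> K \<subseteq> V \<and> {A \<in> KX X. A \<subseteq> V} \<subseteq> \<U>" by (rule exE)
    then have V: "openin X V" "K \<subseteq> V" "{A \<in> KX X. A \<subseteq> V} \<subseteq> \<U>" by simp_all
    have "openin (upper_vietoris X) {A \<in> KX X. A \<subseteq> V}"
      unfolding upper_vietoris_def openin_topology_generated_by_iff
      by (rule generate_topology_on.Basis) (use V in blast)
    moreover have "K \<in> KX X" using S K unfolding scott_open_def by blast
    then have "K \<in> {A\<in>KX X. A \<subseteq> V}" using V by blast
    ultimately show "\<exists>T. openin (upper_vietoris X) T \<and> K \<in> T \<and> T \<subseteq> \<U>"
      using V(3) by (intro exI[of _ "{A\<in>KX X. A \<subseteq> V}"]) simp
  qed
qed

end
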